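(* In the setting of fiber bundle complexes $B\otimes_\varphi F$ (with $B,F$ two-term complexes over $\mathbb{F}_2$), suppose that (1) every $\varphi(b^1,b^0)$ induces the identity on $H_0(F)$ and on $H_1(F)$; (2) $F$ has an augmentation $\epsilon:F_0\to\mathbb{F}_2$ (i.e. $\epsilon\partial^F=0$) whose induced map $H_0(F)\to\mathbb{F}_2$ is an isomorphism; (3) $H_0(B)=0$. Then the chain map $\pi_*:B\otimes_\varphi F\to B$ given by $b\otimes f\mapsto\epsilon(f)b$ on $B_1\otimes F_0$ and on $B_0\otimes F_0$, and by $0$ on $B_0\otimes F_1$ and $B_1\otimes F_1$, induces an isomorphism $H_1(B\otimes_\varphi F)\to H_1(B)$; and the map $\pi^*$ sending $\beta\in B^1=B_1^*$ to the functional on $(B\otimes_\varphi F)_1=(B_1\otimes F_0)\oplus(B_0\otimes F_1)$ given by $\beta\otimes\epsilon$ on $B_1\otimes F_0$ and $0$ on $B_0\otimes F_1$ induces an isomorphism $H^1(B)\to H^1(B\otimes_\varphi F)$.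
   Context: $\operatorname{Aut}(F)$ denotes the group of chain automorphisms of $F=(F_1\xrightarrow{\partial^F}F_0)$. $B=(B_1\xrightarrow{\partial^B}B_0)$ has distinguished bases; write $b^0\in\partial^Bb^1$ if basis vector $b^0$ appears with nonzero coefficient in $\partial^Bb^1$. A connection $\varphi$ assigns to each such pair an element $\varphi(b^1,b^0)\in\operatorname{Aut}(F)$; $\partial_\varphi(b^1\otimes f)=\sum_{b^0\in\partial^Bb^1}b^0\otimes\varphi(b^1,b^0)(f)$. $B\otimes_\varphi F$ is the total complex with degree-2,1,0 parts $B_1\otimes F_1$, $(B_1\otimes F_0)\oplus(B_0\otimes F_1)$, $B_0\otimes F_0$ and differential $\partial_\varphi+\operatorname{id}\otimes\partial^F$. Cohomology $H^i$ of a complex of finite-dimensional spaces is the homology of the dual complex with transposed differentials. *)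

theory Defs
  imports Main "HOL-Library.Z2"
begin

text \<open>Finite-dimensional F_2-vector spaces with distinguished bases are modelled by
  finite index sets S; a vector is a coordinate function S -> bit vanishing outside S.
  A linear map from span S to span T is a matrix M with M i j = coefficient of the
  basis vector j in the image of the basis vector i.\<close>

definition vecs :: "'i set \<Rightarrow> ('i \<Rightarrow> bit) set" where
  "vecs S = {v. \<forall>x. x \<notin> S \<longrightarrow> v x = 0}"

definition mat_app :: "'i set \<Rightarrow> 'j set \<Rightarrow> ('i \<Rightarrow> 'j \<Rightarrow> bit) \<Rightarrow> ('i \<Rightarrow> bit) \<Rightarrow> ('j \<Rightarrow> bit)" where
  "mat_app S T M v = (\<lambda>j. if j \<in> T then (\<Sum>i\<in>S. v i * M i j) else 0)"

definition transp :: "('i \<Rightarrow> 'j \<Rightarrow> bit) \<Rightarrow> ('j \<Rightarrow> 'i \<Rightarrow> bit)" where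
  "transp M = (\<lambda>j i. M i j)"

definition cycles :: "'y set \<Rightarrow> 'z set \<Rightarrow> ('y \<Rightarrow> 'z \<Rightarrow> bit) \<Rightarrow> ('y \<Rightarrow> bit) set" where
  "cycles Y Z e = {y \<in> vecs Y. mat_app Y Z e y = (\<lambda>_. 0)}"

definition bounds :: "'x set \<Rightarrow> 'y set \<Rightarrow> ('x \<Rightarrow> 'y \<Rightarrow> bit) \<Rightarrow> ('y \<Rightarrow> bit) set" where
  "bounds X Y d = mat_app X Y d ` vecs X"

definition induces_homology_iso ::
  "'x set \<Rightarrow> 'y set \<Rightarrow> 'z set \<Rightarrow> ('x \<Rightarrow> 'y \<Rightarrow> bit) \<Rightarrow> ('y \<Rightarrow> 'z \<Rightarrow> bit) \<Rightarrow>
   'x2 set \<Rightarrow> 'y2 set \<Rightarrow> 'z2 set \<Rightarrow> ('x2 \<Rightarrow> 'y2 \<Rightarrow> bit) \<Rightarrow> ('y2 \<Rightarrow> 'z2 \<Rightarrow> bit) \<Rightarrow>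
   ('y \<Rightarrow> 'y2 \<Rightarrow> bit) \<Rightarrow> bool" where
  "induces_homology_iso X Y Z d e X' Y' Z' d' e' f \<longleftrightarrow>
     (\<forall>y\<in>cycles Y Z e. mat_app Y Y' f y \<in> cycles Y' Z' e') \<and>
     (\<forall>y\<in>bounds X Y d. mat_app Y Y' f y \<in> bounds X' Y' d') \<and>
     (\<forall>z\<in>cycles Y' Z' e'. \<exists>y\<in>cycles Y Z e. (\<lambda>j. mat_app Y Y' f y j - z j) \<in> bounds X' Y' d') \<and>
     (\<forall>y\<in>cycles Y Z e. mat_app Y Y' f y \<in> bounds X' Y' d' \<longrightarrow> y \<in> bounds X Y d)"

definition induces_identity_on_homology ::
  "'x set \<Rightarrow> 'y set \<Rightarrow> 'z set \<Rightarrow> ('x \<Rightarrow> 'y \<Rightarrow> bit) \<Rightarrow> ('y \<Rightarrow> 'z \<Rightarrow> bit) \<Rightarrow>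
   ('y \<Rightarrow> 'y \<Rightarrow> bit) \<Rightarrow> bool" where
  "induces_identity_on_homology X Y Z d e g \<longleftrightarrow>
     (\<forall>y\<in>cycles Y Z e. (\<lambda>j. mat_app Y Y g y j - y j) \<in> bounds X Y d)"

definition chain_aut ::
  "'k1 set \<Rightarrow> 'k0 set \<Rightarrow> ('k1 \<Rightarrow> 'k0 \<Rightarrow> bit) \<Rightarrow>
   ('k1 \<Rightarrow> 'k1 \<Rightarrow> bit) \<times> ('k0 \<Rightarrow> 'k0 \<Rightarrow> bit) \<Rightarrow> bool" where
  "chain_aut K1 K0 dF g \<longleftrightarrow>
     bij_betw (mat_app K1 K1 (fst g)) (vecs K1) (vecs K1) \<and>
     bij_betw (mat_app K0 K0 (snd g)) (vecs K0) (vecs K0) \<and>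
     (\<forall>v\<in>vecs K1. mat_app K1 K0 dF (mat_app K1 K1 (fst g) v) =
                   mat_app K0 K0 (snd g) (mat_app K1 K0 dF v))"

definition is_connection ::
  "'b1 set \<Rightarrow> 'b0 set \<Rightarrow> ('b1 \<Rightarrow> 'b0 \<Rightarrow> bit) \<Rightarrow>
   'k1 set \<Rightarrow> 'k0 set \<Rightarrow> ('k1 \<Rightarrow> 'k0 \<Rightarrow> bit) \<Rightarrow>
   ('b1 \<Rightarrow> 'b0 \<Rightarrow> ('k1 \<Rightarrow> 'k1 \<Rightarrow> bit) \<times> ('k0 \<Rightarrow> 'k0 \<Rightarrow> bit)) \<Rightarrow> bool" where
  "is_connection I1 I0 dB K1 K0 dF phi \<longleftrightarrow>
     (\<forall>b1\<in>I1. \<forall>b0\<in>I0. dB b1 b0 \<noteq> 0 \<longrightarrow> chain_aut K1 K0 dF (phi b1 b0))"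

text \<open>The total complex B \<otimes>_phi F: degree 2 basis I1 x K1, degree 1 basis
  (I1 x K0) + (I0 x K1), degree 0 basis I0 x K0; differential partial_phi + id \<otimes> dF.\<close>

definition tot_C1 :: "'b1 set \<Rightarrow> 'b0 set \<Rightarrow> 'k1 set \<Rightarrow> 'k0 set \<Rightarrow> (('b1 \<times> 'k0) + ('b0 \<times> 'k1)) set" where
  "tot_C1 I1 I0 K1 K0 = Inl ` (I1 \<times> K0) \<union> Inr ` (I0 \<times> K1)"

fun tot_d2 ::
  "('b1 \<Rightarrow> 'b0 \<Rightarrow> bit) \<Rightarrow> ('k1 \<Rightarrow> 'k0 \<Rightarrow> bit) \<Rightarrow>
   ('b1 \<Rightarrow> 'b0 \<Rightarrow> ('k1 \<Rightarrow> 'k1 \<Rightarrow> bit) \<times> ('k0 \<Rightarrow> 'k0 \<Rightarrow> bit)) \<Rightarrow>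
   ('b1 \<times> 'k1) \<Rightarrow> (('b1 \<times> 'k0) + ('b0 \<times> 'k1)) \<Rightarrow> bit" where
  "tot_d2 dB dF phi (b1, k1) (Inl (b1', k0)) = (if b1 = b1' then dF k1 k0 else 0)"
| "tot_d2 dB dF phi (b1, k1) (Inr (b0, k1')) = dB b1 b0 * fst (phi b1 b0) k1 k1'"

fun tot_d1 ::
  "('b1 \<Rightarrow> 'b0 \<Rightarrow> bit) \<Rightarrow> ('k1 \<Rightarrow> 'k0 \<Rightarrow> bit) \<Rightarrow>
   ('b1 \<Rightarrow> 'b0 \<Rightarrow> ('k1 \<Rightarrow> 'k1 \<Rightarrow> bit) \<times> ('k0 \<Rightarrow> 'k0 \<Rightarrow> bit)) \<Rightarrow>
   (('b1 \<times> 'k0) + ('b0 \<times> 'k1)) \<Rightarrow> ('b0 \<times> 'k0) \<Rightarrow> bit" where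
  "tot_d1 dB dF phi (Inl (b1, k0)) (b0, k0') = dB b1 b0 * snd (phi b1 b0) k0 k0'"
| "tot_d1 dB dF phi (Inr (b0, k1)) (b0', k0) = (if b0 = b0' then dF k1 k0 else 0)"

text \<open>pi_* in degree 1 (matrix (B\<otimes>F)_1 -> B_1) and pi^* on B^1 (matrix B_1 -> (B\<otimes>F)_1 in
  dual coordinates); eps k0 is the value of the augmentation on basis vector k0.\<close>

fun pi_lower :: "('k0 \<Rightarrow> bit) \<Rightarrow> (('b1 \<times> 'k0) + ('b0 \<times> 'k1)) \<Rightarrow> 'b1 \<Rightarrow> bit" where
  "pi_lower eps (Inl (b1, k0)) b1' = (if b1 = b1' then eps k0 else 0)"
| "pi_lower eps (Inr _) b1' = 0"

fun pi_upper :: "('k0 \<Rightarrow> bit) \<Rightarrow> 'b1 \<Rightarrow> (('b1 \<times> 'k0) + ('b0 \<times> 'k1)) \<Rightarrow> bit" where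
  "pi_upper eps b1 (Inl (b1', k0)) = (if b1 = b1' then eps k0 else 0)"
| "pi_upper eps b1 (Inr _) = 0"

end

theory Submission
  imports Defs
begin


declare add_bit_eq_xor[simp del] mult_bit_eq_and[simp del]

lemma bit_add_self[simp]: "(x::bit) + x = 0" by (cases x) simp_all
lemma bit_add_self2[simp]: "(x::bit) + (x + y) = y" by (cases x) simp_all

lemma vecsD: "v \<in> vecs S \<Longrightarrow> x \<notin> S \<Longrightarrow> v x = 0" by (auto simp: vecs_def)
lemma vecsI: "(\<And>x. x \<notin> S \<Longrightarrow> v x = 0) \<Longrightarrow> v \<in> vecs S" by (auto simp: vecs_def)
lemma mat_app_vecs[simp]: "mat_app S T M v \<in> vecs T" by (auto simp: vecs_def mat_app_def)
lemma mat_app_in: "j \<in> T \<Longrightarrow> mat_app S T M v j = (\<Sum>i\<in>S. v i * M i j)" by (simp add: mat_app_def)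
lemma mat_app_out: "j \<notin> T \<Longrightarrow> mat_app S T M v j = 0" by (simp add: mat_app_def)
lemma bounds_empty[simp]: "bounds {} T M = {\<lambda>_. 0}"
proof -
  have "mat_app {} T M v = (\<lambda>_. 0)" for v by (rule ext) (simp add: mat_app_def)
  moreover have "(\<lambda>_. 0) \<in> vecs {}" by (simp add: vecs_def)
  ultimately show ?thesis unfolding bounds_def by auto
qed
lemma cycles_empty[simp]: "cycles S {} M = vecs S"
  by (auto simp: cycles_def mat_app_def)
lemma mat_app_add: "mat_app S T M (\<lambda>i. v i + w i) = (\<lambda>j. mat_app S T M v j + mat_app S T M w j)"
  by (auto simp: mat_app_def sum.distrib distrib_right)
lemma mat_app_smult: "mat_app S T M (\<lambda>i. c * v i) = (\<lambda>j. c * mat_app S T M v j)"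
  by (auto simp: mat_app_def sum_distrib_left mult.assoc)
lemma mat_app_sum: "finite A \<Longrightarrow> mat_app S T M (\<lambda>i. \<Sum>a\<in>A. f a i) = (\<lambda>j. \<Sum>a\<in>A. mat_app S T M (f a) j)"
  apply (rule ext) apply (case_tac "j \<in> T") apply (simp_all add: mat_app_def sum_distrib_right)
  by (rule sum.swap)
lemma mat_app_delta: assumes "finite S" "k \<in> S" "j \<in> T" shows "mat_app S T M (\<lambda>i. if i = k then 1 else 0) j = M k j"
proof -
  have "(\<Sum>i\<in>S. (if i = k then 1 else 0) * M i j) = (\<Sum>i\<in>S. if i = k then M i j else 0)"
    by (rule sum.cong) auto
  then show ?thesis using assms by (simp add: mat_app_def)
qed
lemma delta_vecs: "k \<in> S \<Longrightarrow> (\<lambda>i. if i = k then 1 else 0) \<in> vecs S"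
  by (auto simp: vecs_def)

lemma sum_delta_l: "finite S \<Longrightarrow> k \<in> S \<Longrightarrow> (\<Sum>i\<in>S. (if i = k then 1 else 0) * f i) = (f k::bit)"
proof -
  assume "finite S" "k \<in> S"
  moreover have "(\<Sum>i\<in>S. (if i = k then 1 else 0) * f i) = (\<Sum>i\<in>S. if i = k then f i else 0)"
    by (rule sum.cong) auto
  ultimately show ?thesis by simp
qed
lemma sum_delta_r: "finite S \<Longrightarrow> k \<in> S \<Longrightarrow> (\<Sum>i\<in>S. f i * (if i = k then 1 else 0)) = (f k::bit)"
  using sum_delta_l[of S k f] by (simp add: mult.commute)

lemma bit_eq_add: "((a::bit) + b = c) \<Longrightarrow> (a = b + c)"
  by (cases a; cases b; cases c) simp_all

lemma sum_prod: "(\<Sum>p\<in>A \<times> B. f p) = (\<Sum>a\<in>A. \<Sum>b\<in>B. f (a,b))"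
  unfolding sum.cartesian_product by (rule sum.cong) auto

lemma sum_C1: assumes "finite I1" "finite I0" "finite K1" "finite K0"
  shows "(\<Sum>c\<in>tot_C1 I1 I0 K1 K0. f c) = (\<Sum>b1\<in>I1. \<Sum>k0\<in>K0. f (Inl (b1,k0))) + (\<Sum>b0\<in>I0. \<Sum>k1\<in>K1. f (Inr (b0,k1)))"
proof -
  have "(\<Sum>c\<in>tot_C1 I1 I0 K1 K0. f c) = (\<Sum>c\<in>Inl ` (I1 \<times> K0). f c) + (\<Sum>c\<in>Inr ` (I0 \<times> K1). f c)"
    unfolding tot_C1_def using assms by (intro sum.union_disjoint) auto
  also have "\<dots> = (\<Sum>p\<in>I1 \<times> K0. f (Inl p)) + (\<Sum>p\<in>I0 \<times> K1. f (Inr p))"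
    by (simp add: sum.reindex)
  finally show ?thesis by (simp add: sum.cartesian_product)
qed


lemma mat_app_cong: "(\<And>i. i \<in> S \<Longrightarrow> v i = w i) \<Longrightarrow> mat_app S T M v = mat_app S T M w"
  by (auto simp: mat_app_def intro!: sum.cong ext)

lemma swap_pair: assumes "finite S" "finite T"
  shows "(\<Sum>i\<in>S. y i * (\<Sum>j\<in>T. p j * M i j)) = (\<Sum>j\<in>T. p j * mat_app S T M y j)"
proof -
  have "(\<Sum>j\<in>T. p j * mat_app S T M y j) = (\<Sum>j\<in>T. \<Sum>i\<in>S. y i * (p j * M i j))"
    by (auto simp: mat_app_in sum_distrib_left mult_ac intro!: sum.cong)
  also have "\<dots> = (\<Sum>i\<in>S. \<Sum>j\<in>T. y i * (p j * M i j))" by (rule sum.swap)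
  finally show ?thesis by (simp add: sum_distrib_left)
qed

lemma swap2: "(\<Sum>i\<in>A. f i * (\<Sum>j\<in>B. g j * h i j)) = (\<Sum>j\<in>B. g j * (\<Sum>i\<in>A. f i * h i j :: bit))"
proof -
  have "(\<Sum>i\<in>A. f i * (\<Sum>j\<in>B. g j * h i j)) = (\<Sum>i\<in>A. \<Sum>j\<in>B. g j * (f i * h i j))"
    by (simp add: sum_distrib_left mult_ac)
  also have "\<dots> = (\<Sum>j\<in>B. \<Sum>i\<in>A. g j * (f i * h i j))" by (rule sum.swap)
  finally show ?thesis by (simp add: sum_distrib_left)
qed

lemma dual:
  fixes M :: "'i \<Rightarrow> 'j \<Rightarrow> bit" and S :: "'i set" and T :: "'j set"
  assumes "finite S" "finite T"
    and "\<forall>y\<in>vecs S. (\<forall>j\<in>T. (\<Sum>i\<in>S. y i * M i j) = 0) \<longrightarrow> (\<Sum>i\<in>S. \<phi> i * y i) = 0"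
  shows "\<exists>\<psi>. \<forall>i\<in>S. \<phi> i = (\<Sum>j\<in>T. \<psi> j * M i j)"
  using assms(2,3)
proof (induction T arbitrary: \<phi> rule: finite_induct)
  case empty
  have "\<phi> i = 0" if i: "i \<in> S" for i
  proof -
    have h: "\<And>y. y \<in> vecs S \<Longrightarrow> (\<Sum>i\<in>S. \<phi> i * y i) = 0" using empty by simp
    have "(\<Sum>i'\<in>S. \<phi> i' * (if i' = i then 1 else 0)) = 0"
      using h[OF delta_vecs[OF i]] .
    then show ?thesis using sum_delta_r[OF assms(1) i] by simp
  qed
  then show ?case by simp
next
  case (insert t T \<phi>)
  show ?case
  proof (cases "\<forall>y\<in>vecs S. (\<forall>j\<in>T. (\<Sum>i\<in>S. y i * M i j) = 0) \<longrightarrow> (\<Sum>i\<in>S. y i * M i t) = 0")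
    case True
    have "\<forall>y\<in>vecs S. (\<forall>j\<in>T. (\<Sum>i\<in>S. y i * M i j) = 0) \<longrightarrow> (\<Sum>i\<in>S. \<phi> i * y i) = 0"
      using True insert.prems by auto
    then obtain \<psi> where \<psi>: "\<forall>i\<in>S. \<phi> i = (\<Sum>j\<in>T. \<psi> j * M i j)" using insert.IH by blast
    have "\<forall>i\<in>S. \<phi> i = (\<Sum>j\<in>insert t T. (\<psi>(t := 0)) j * M i j)"
    proof
      fix i assume i: "i \<in> S"
      have "(\<Sum>j\<in>insert t T. (\<psi>(t := 0)) j * M i j) = (\<Sum>j\<in>T. (\<psi>(t := 0)) j * M i j)"
        using insert.hyps by simp
      also have "\<dots> = (\<Sum>j\<in>T. \<psi> j * M i j)"
        using insert.hyps by (intro sum.cong) auto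
      finally show "\<phi> i = (\<Sum>j\<in>insert t T. (\<psi>(t := 0)) j * M i j)" using \<psi> i by simp
    qed
    then show ?thesis by blast
  next
    case False
    then obtain e0 where e0: "e0 \<in> vecs S" "\<forall>j\<in>T. (\<Sum>i\<in>S. e0 i * M i j) = 0" "(\<Sum>i\<in>S. e0 i * M i t) = 1"
      by auto
    define a where "a = (\<Sum>i\<in>S. \<phi> i * e0 i)"
    define \<phi>' where "\<phi>' i = \<phi> i + a * M i t" for i
    have "\<forall>y\<in>vecs S. (\<forall>j\<in>T. (\<Sum>i\<in>S. y i * M i j) = 0) \<longrightarrow> (\<Sum>i\<in>S. \<phi>' i * y i) = 0"
    proof (intro ballI impI)
      fix y assume y: "y \<in> vecs S" "\<forall>j\<in>T. (\<Sum>i\<in>S. y i * M i j) = 0"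
      define s where "s = (\<Sum>i\<in>S. y i * M i t)"
      define y' where "y' i = y i + s * e0 i" for i
      have lin: "(\<Sum>i\<in>S. y' i * M i j) = (\<Sum>i\<in>S. y i * M i j) + s * (\<Sum>i\<in>S. e0 i * M i j)" for j
        unfolding y'_def by (simp add: distrib_right sum.distrib sum_distrib_left mult.assoc)
      have y'v: "y' \<in> vecs S" using y(1) e0(1) by (auto simp: vecs_def y'_def)
      have "\<forall>j\<in>insert t T. (\<Sum>i\<in>S. y' i * M i j) = 0"
        using lin y(2) e0(2,3) by (auto simp: s_def)
      then have "(\<Sum>i\<in>S. \<phi> i * y' i) = 0" using insert.prems y'v by blast
      moreover have "(\<Sum>i\<in>S. \<phi> i * y' i) = (\<Sum>i\<in>S. \<phi> i * y i) + s * a"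
        unfolding y'_def a_def by (simp add: distrib_left sum.distrib sum_distrib_left mult_ac)
      moreover have "(\<Sum>i\<in>S. \<phi>' i * y i) = (\<Sum>i\<in>S. \<phi> i * y i) + a * s"
        unfolding \<phi>'_def s_def distrib_right sum.distrib sum_distrib_left by (simp add: mult_ac)
      ultimately show "(\<Sum>i\<in>S. \<phi>' i * y i) = 0" by (simp add: mult.commute)
    qed
    then obtain \<psi> where \<psi>: "\<forall>i\<in>S. \<phi>' i = (\<Sum>j\<in>T. \<psi> j * M i j)" using insert.IH by blast
    have "\<forall>i\<in>S. \<phi> i = (\<Sum>j\<in>insert t T. (\<psi>(t := a)) j * M i j)"
    proof
      fix i assume i: "i \<in> S"
      have "(\<Sum>j\<in>insert t T. (\<psi>(t := a)) j * M i j) = a * M i t + (\<Sum>j\<in>T. (\<psi>(t := a)) j * M i j)"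
        using insert.hyps by simp
      also have "(\<Sum>j\<in>T. (\<psi>(t := a)) j * M i j) = (\<Sum>j\<in>T. \<psi> j * M i j)"
        using insert.hyps by (intro sum.cong) auto
      finally have calc: "(\<Sum>j\<in>insert t T. (\<psi>(t := a)) j * M i j) = a * M i t + (\<Sum>j\<in>T. \<psi> j * M i j)" .
      have "\<phi> i + a * M i t = (\<Sum>j\<in>T. \<psi> j * M i j)" using \<psi> i unfolding \<phi>'_def by blast
      then have "\<phi> i = a * M i t + (\<Sum>j\<in>T. \<psi> j * M i j)" by (rule bit_eq_add)
      then show "\<phi> i = (\<Sum>j\<in>insert t T. (\<psi>(t := a)) j * M i j)" using calc by simp
    qed
    then show ?thesis by blast
  qed
qed

locale fb =
  fixes I1 :: "'b1 set" and I0 :: "'b0 set" and K1 :: "'k1 set" and K0 :: "'k0 set"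
    and dB :: "'b1 \<Rightarrow> 'b0 \<Rightarrow> bit" and dF :: "'k1 \<Rightarrow> 'k0 \<Rightarrow> bit"
    and phi :: "'b1 \<Rightarrow> 'b0 \<Rightarrow> ('k1 \<Rightarrow> 'k1 \<Rightarrow> bit) \<times> ('k0 \<Rightarrow> 'k0 \<Rightarrow> bit)"
    and eps :: "'k0 \<Rightarrow> bit"
  assumes finI1: "finite I1" and finI0: "finite I0" and finK1: "finite K1" and finK0: "finite K0"
    and conn: "is_connection I1 I0 dB K1 K0 dF phi"
    and triv_H0: "\<forall>b1\<in>I1. \<forall>b0\<in>I0. dB b1 b0 \<noteq> 0 \<longrightarrow>
          induces_identity_on_homology K1 K0 ({} :: unit set) dF (\<lambda>_ _. 0) (snd (phi b1 b0))"
    and triv_H1: "\<forall>b1\<in>I1. \<forall>b0\<in>I0. dB b1 b0 \<noteq> 0 \<longrightarrow>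
          induces_identity_on_homology ({} :: unit set) K1 K0 (\<lambda>_ _. 0) dF (fst (phi b1 b0))"
    and aug: "\<forall>v\<in>vecs K1. mat_app K0 (UNIV :: unit set) (\<lambda>k _. eps k) (mat_app K1 K0 dF v) = (\<lambda>_. 0)"
    and aug_iso: "induces_homology_iso K1 K0 ({} :: unit set) dF (\<lambda>_ _. 0)
          ({} :: unit set) (UNIV :: unit set) ({} :: unit set) (\<lambda>_ _. 0) (\<lambda>_ _. 0) (\<lambda>k _. eps k)"
    and H0B: "cycles I0 ({} :: unit set) (\<lambda>_ _. 0) \<subseteq> bounds I1 I0 dB"
begin

abbreviation "C1 \<equiv> tot_C1 I1 I0 K1 K0"
abbreviation "d2 \<equiv> tot_d2 dB dF phi"
abbreviation "d1 \<equiv> tot_d1 dB dF phi"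
abbreviation "g0 b1 b0 \<equiv> snd (phi b1 b0)"
abbreviation "g1 b1 b0 \<equiv> fst (phi b1 b0)"

definition ev :: "('k0 \<Rightarrow> bit) \<Rightarrow> bit" where "ev w = (\<Sum>k\<in>K0. w k * eps k)"

lemmas fins = finI1 finI0 finK1 finK0

lemma d2_Inl: assumes "b1 \<in> I1"
  shows "mat_app (I1 \<times> K1) C1 d2 z (Inl (b1,k0)) = mat_app K1 K0 dF (\<lambda>k1. z (b1,k1)) k0"
proof (cases "k0 \<in> K0")
  case True
  have "mat_app (I1 \<times> K1) C1 d2 z (Inl (b1,k0)) = (\<Sum>b1'\<in>I1. \<Sum>k1\<in>K1. z (b1',k1) * d2 (b1',k1) (Inl (b1,k0)))"
    using True assms by (simp add: mat_app_in tot_C1_def sum_prod)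
  also have "\<dots> = (\<Sum>b1'\<in>I1. if b1' = b1 then (\<Sum>k1\<in>K1. z (b1,k1) * dF k1 k0) else 0)"
    by (rule sum.cong) auto
  finally show ?thesis using assms True finI1 by (simp add: mat_app_in)
next
  case False thus ?thesis by (subst mat_app_out) (auto simp: mat_app_out tot_C1_def)
qed

lemma d2_Inr: assumes "b0 \<in> I0"
  shows "mat_app (I1 \<times> K1) C1 d2 z (Inr (b0,k1')) = (\<Sum>b1\<in>I1. dB b1 b0 * mat_app K1 K1 (g1 b1 b0) (\<lambda>k1. z (b1,k1)) k1')"
proof (cases "k1' \<in> K1")
  case True
  have "mat_app (I1 \<times> K1) C1 d2 z (Inr (b0,k1')) = (\<Sum>b1\<in>I1. \<Sum>k1\<in>K1. z (b1,k1) * d2 (b1,k1) (Inr (b0,k1')))"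
    using True assms by (simp add: mat_app_in tot_C1_def sum_prod)
  also have "\<dots> = (\<Sum>b1\<in>I1. dB b1 b0 * mat_app K1 K1 (g1 b1 b0) (\<lambda>k1. z (b1,k1)) k1')"
    using True by (auto simp: mat_app_in sum_distrib_left mult_ac intro!: sum.cong)
  finally show ?thesis .
next
  case False thus ?thesis by (subst mat_app_out) (auto simp: mat_app_out tot_C1_def)
qed

lemma d1_formula: assumes "b0 \<in> I0"
  shows "mat_app C1 (I0 \<times> K0) d1 x (b0,k0) =
    (\<Sum>b1\<in>I1. dB b1 b0 * mat_app K0 K0 (g0 b1 b0) (\<lambda>k. x (Inl (b1,k))) k0) + mat_app K1 K0 dF (\<lambda>k. x (Inr (b0,k))) k0"
proof (cases "k0 \<in> K0")
  case True
  have "mat_app C1 (I0 \<times> K0) d1 x (b0,k0) = (\<Sum>b1\<in>I1. \<Sum>k\<in>K0. x (Inl (b1,k)) * d1 (Inl (b1,k)) (b0,k0))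
     + (\<Sum>b0'\<in>I0. \<Sum>k1\<in>K1. x (Inr (b0',k1)) * d1 (Inr (b0',k1)) (b0,k0))"
    using True assms by (simp add: mat_app_in sum_C1[OF fins])
  also have "(\<Sum>b1\<in>I1. \<Sum>k\<in>K0. x (Inl (b1,k)) * d1 (Inl (b1,k)) (b0,k0)) = 
     (\<Sum>b1\<in>I1. dB b1 b0 * mat_app K0 K0 (g0 b1 b0) (\<lambda>k. x (Inl (b1,k))) k0)"
    using True by (auto simp: mat_app_in sum_distrib_left mult_ac intro!: sum.cong)
  also have "(\<Sum>b0'\<in>I0. \<Sum>k1\<in>K1. x (Inr (b0',k1)) * d1 (Inr (b0',k1)) (b0,k0)) =
     (\<Sum>b0'\<in>I0. if b0' = b0 then mat_app K1 K0 dF (\<lambda>k. x (Inr (b0,k))) k0 else 0)"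
    using True by (auto simp: mat_app_in intro!: sum.cong)
  finally show ?thesis using assms finI0 by simp
next
  case False thus ?thesis by (simp add: mat_app_out)
qed

lemma pil_formula: assumes "b1 \<in> I1"
  shows "mat_app C1 I1 (pi_lower eps) x b1 = ev (\<lambda>k. x (Inl (b1,k)))"
proof -
  have "mat_app C1 I1 (pi_lower eps) x b1 = (\<Sum>b1'\<in>I1. \<Sum>k\<in>K0. x (Inl (b1',k)) * pi_lower eps (Inl (b1',k)) b1)
     + (\<Sum>b0'\<in>I0. \<Sum>k1\<in>K1. x (Inr (b0',k1)) * pi_lower eps (Inr (b0',k1)) b1)"
    using assms by (simp add: mat_app_in sum_C1[OF fins])
  also have "(\<Sum>b1'\<in>I1. \<Sum>k\<in>K0. x (Inl (b1',k)) * pi_lower eps (Inl (b1',k)) b1)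
     + (\<Sum>b0'\<in>I0. \<Sum>k1\<in>K1. x (Inr (b0',k1)) * pi_lower eps (Inr (b0',k1)) b1) = (\<Sum>b1'\<in>I1. if b1' = b1 then ev (\<lambda>k. x (Inl (b1,k))) else 0)"
    by (auto simp: ev_def intro!: sum.cong)
  finally show ?thesis using assms finI1 by simp
qed

lemma d1t_Inl: assumes "b1 \<in> I1" "k0 \<in> K0"
  shows "mat_app (I0 \<times> K0) C1 (transp d1) V (Inl (b1,k0)) = (\<Sum>b0\<in>I0. dB b1 b0 * (\<Sum>k\<in>K0. V (b0,k) * g0 b1 b0 k0 k))"
  using assms by (auto simp: mat_app_in tot_C1_def transp_def sum_prod sum_distrib_left mult_ac intro!: sum.cong)

lemma d1t_Inr: assumes "b0 \<in> I0" "k1 \<in> K1"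
  shows "mat_app (I0 \<times> K0) C1 (transp d1) V (Inr (b0,k1)) = (\<Sum>k\<in>K0. V (b0,k) * dF k1 k)"
proof -
  have "mat_app (I0 \<times> K0) C1 (transp d1) V (Inr (b0,k1)) = (\<Sum>b0'\<in>I0. \<Sum>k\<in>K0. V (b0',k) * transp d1 (b0',k) (Inr (b0,k1)))"
    using assms by (simp add: mat_app_in tot_C1_def sum_prod)
  also have "\<dots> = (\<Sum>b0'\<in>I0. if b0 = b0' then (\<Sum>k\<in>K0. V (b0,k) * dF k1 k) else 0)"
    by (auto simp: transp_def intro!: sum.cong)
  finally show ?thesis using assms finI0 by simp
qed

lemma d2t_formula: assumes "b1 \<in> I1" "k1 \<in> K1"
  shows "mat_app C1 (I1 \<times> K1) (transp d2) \<psi> (b1,k1) = (\<Sum>k\<in>K0. \<psi> (Inl (b1,k)) * dF k1 k)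
     + (\<Sum>b0\<in>I0. dB b1 b0 * (\<Sum>k\<in>K1. \<psi> (Inr (b0,k)) * g1 b1 b0 k1 k))"
proof -
  have "mat_app C1 (I1 \<times> K1) (transp d2) \<psi> (b1,k1) = (\<Sum>b1'\<in>I1. \<Sum>k\<in>K0. \<psi> (Inl (b1',k)) * transp d2 (Inl (b1',k)) (b1,k1))
     + (\<Sum>b0'\<in>I0. \<Sum>k\<in>K1. \<psi> (Inr (b0',k)) * transp d2 (Inr (b0',k)) (b1,k1))"
    using assms by (simp add: mat_app_in sum_C1[OF fins])
  also have "(\<Sum>b1'\<in>I1. \<Sum>k\<in>K0. \<psi> (Inl (b1',k)) * transp d2 (Inl (b1',k)) (b1,k1))
     = (\<Sum>b1'\<in>I1. if b1 = b1' then (\<Sum>k\<in>K0. \<psi> (Inl (b1,k)) * dF k1 k) else 0)"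
    by (auto simp: transp_def intro!: sum.cong)
  also have "(\<Sum>b0'\<in>I0. \<Sum>k\<in>K1. \<psi> (Inr (b0',k)) * transp d2 (Inr (b0',k)) (b1,k1))
     = (\<Sum>b0\<in>I0. dB b1 b0 * (\<Sum>k\<in>K1. \<psi> (Inr (b0,k)) * g1 b1 b0 k1 k))"
    by (auto simp: transp_def sum_distrib_left mult_ac intro!: sum.cong)
  finally show ?thesis using assms finI1 by simp
qed

lemma piu_Inl: assumes "b1 \<in> I1" "k0 \<in> K0"
  shows "mat_app I1 C1 (pi_upper eps) \<beta> (Inl (b1,k0)) = \<beta> b1 * eps k0"
proof -
  have "mat_app I1 C1 (pi_upper eps) \<beta> (Inl (b1,k0)) = (\<Sum>b\<in>I1. if b = b1 then \<beta> b1 * eps k0 else 0)"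
    using assms by (auto simp: mat_app_in tot_C1_def intro!: sum.cong)
  then show ?thesis using assms finI1 by simp
qed

lemma piu_Inr: "mat_app I1 C1 (pi_upper eps) \<beta> (Inr p) = 0"
  by (cases "Inr p \<in> C1") (auto simp: mat_app_in mat_app_out)


lemma ev_mat: "mat_app K0 (UNIV::unit set) (\<lambda>k _. eps k) w = (\<lambda>_. ev w)"
  by (rule ext) (simp add: mat_app_def ev_def)

lemma ev_add: "ev (\<lambda>k. a k + b k) = ev a + ev b"
  by (simp add: ev_def sum.distrib distrib_right)
lemma ev_smult: "ev (\<lambda>k. c * a k) = c * ev a"
  by (simp add: ev_def sum_distrib_left mult.assoc)
lemma ev_sum: "finite A \<Longrightarrow> ev (\<lambda>k. \<Sum>i\<in>A. f i k) = (\<Sum>i\<in>A. ev (f i))"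
  unfolding ev_def sum_distrib_right by (rule sum.swap)
lemma ev_zero: "ev (\<lambda>_. 0) = 0" by (simp add: ev_def)

lemma ev_dF: assumes "v \<in> vecs K1" shows "ev (mat_app K1 K0 dF v) = 0"
proof -
  have "mat_app K0 (UNIV::unit set) (\<lambda>k _. eps k) (mat_app K1 K0 dF v) = (\<lambda>_. 0)" using aug assms by blast
  then have "(\<lambda>_::unit. ev (mat_app K1 K0 dF v)) = (\<lambda>_. 0)" by (simp only: ev_mat)
  then show ?thesis by (drule_tac x="()" in fun_cong) simp
qed

lemma ev_dF_delta: "k1 \<in> K1 \<Longrightarrow> (\<Sum>k\<in>K0. dF k1 k * eps k) = 0"
proof -
  assume k: "k1 \<in> K1"
  have "0 = ev (mat_app K1 K0 dF (\<lambda>i. if i = k1 then 1 else 0))"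
    using ev_dF[OF delta_vecs[OF k]] by simp
  also have "\<dots> = (\<Sum>k\<in>K0. dF k1 k * eps k)"
    unfolding ev_def using k finK1 by (intro sum.cong) (auto simp: mat_app_delta)
  finally show ?thesis by simp
qed

lemma bit_add_eq0: "((a::bit) + b = 0) \<Longrightarrow> a = b"
  by (cases a; cases b) simp_all

lemma exists_e: "\<exists>e\<in>vecs K0. ev e = 1"
proof -
  have "(\<lambda>_. 1) \<in> cycles (UNIV::unit set) ({}::unit set) (\<lambda>_ _. 0)" by (simp add: vecs_def)
  then obtain y where y: "y \<in> vecs K0" "(\<lambda>j. mat_app K0 (UNIV::unit set) (\<lambda>k _. eps k) y j - 1) = (\<lambda>_. 0)"
    using aug_iso unfolding induces_homology_iso_def by fastforce
  then have "ev y - 1 = 0" using fun_cong[OF y(2), of "()"] unfolding ev_mat by simp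
  then have "ev y = 1" by (simp add: bit_add_eq0)
  with y show ?thesis by blast
qed

lemma exact_K0: "y \<in> vecs K0 \<Longrightarrow> ev y = 0 \<Longrightarrow> \<exists>a\<in>vecs K1. y = mat_app K1 K0 dF a"
proof -
  assume y: "y \<in> vecs K0" "ev y = 0"
  have "\<forall>y\<in>cycles K0 ({}::unit set) (\<lambda>_ _. 0). mat_app K0 (UNIV::unit set) (\<lambda>k _. eps k) y \<in> bounds ({}::unit set) (UNIV::unit set) (\<lambda>_ _. 0) \<longrightarrow> y \<in> bounds K1 K0 dF"
    using aug_iso unfolding induces_homology_iso_def by blast
  then have "y \<in> bounds K1 K0 dF"
    using y unfolding ev_mat cycles_empty bounds_empty by simp
  then show ?thesis by (auto simp: bounds_def)
qed

lemma g0_hom: assumes "b1 \<in> I1" "b0 \<in> I0" "dB b1 b0 \<noteq> 0" "y \<in> vecs K0"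
  shows "\<exists>h\<in>vecs K1. mat_app K0 K0 (g0 b1 b0) y = (\<lambda>j. y j + mat_app K1 K0 dF h j)"
proof -
  have "(\<lambda>j. mat_app K0 K0 (g0 b1 b0) y j - y j) \<in> bounds K1 K0 dF"
    using triv_H0 assms unfolding induces_identity_on_homology_def by auto
  then obtain h where h: "h \<in> vecs K1" "(\<lambda>j. mat_app K0 K0 (g0 b1 b0) y j + y j) = mat_app K1 K0 dF h"
    by (auto simp: bounds_def)
  have "mat_app K0 K0 (g0 b1 b0) y j = y j + mat_app K1 K0 dF h j" for j
    using bit_eq_add[OF fun_cong[OF h(2), of j]] by simp
  with h show ?thesis by blast
qed

lemma ev_g0: assumes "b1 \<in> I1" "b0 \<in> I0" "dB b1 b0 \<noteq> 0" "y \<in> vecs K0"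
  shows "ev (mat_app K0 K0 (g0 b1 b0) y) = ev y"
  using g0_hom[OF assms] by (auto simp: ev_add ev_dF)

lemma g1_fix: assumes "b1 \<in> I1" "b0 \<in> I0" "dB b1 b0 \<noteq> 0" "y \<in> vecs K1" "mat_app K1 K0 dF y = (\<lambda>_. 0)"
  shows "mat_app K1 K1 (g1 b1 b0) y = y"
proof -
  have "(\<lambda>j. mat_app K1 K1 (g1 b1 b0) y j - y j) = (\<lambda>_. 0)"
    using triv_H1 assms unfolding induces_identity_on_homology_def cycles_def by auto
  then show ?thesis by (auto simp: fun_eq_iff dest: bit_add_eq0)
qed

lemma chain: assumes "b1 \<in> I1" "b0 \<in> I0" "dB b1 b0 \<noteq> 0" "v \<in> vecs K1"
  shows "mat_app K1 K0 dF (mat_app K1 K1 (g1 b1 b0) v) = mat_app K0 K0 (g0 b1 b0) (mat_app K1 K0 dF v)"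
  using conn assms unfolding is_connection_def chain_aut_def by auto

lemma chain_entry: assumes "b1 \<in> I1" "b0 \<in> I0" "dB b1 b0 \<noteq> 0" "k1 \<in> K1" "k0 \<in> K0"
  shows "(\<Sum>k\<in>K1. g1 b1 b0 k1 k * dF k k0) = (\<Sum>k\<in>K0. dF k1 k * g0 b1 b0 k k0)"
proof -
  let ?d = "\<lambda>i. if i = k1 then 1 else 0"
  have "(\<Sum>k\<in>K1. g1 b1 b0 k1 k * dF k k0) = mat_app K1 K0 dF (mat_app K1 K1 (g1 b1 b0) ?d) k0"
    apply (subst mat_app_in[OF assms(5)])
    using assms finK1 by (auto simp: mat_app_delta intro!: sum.cong)
  also have "\<dots> = mat_app K0 K0 (g0 b1 b0) (mat_app K1 K0 dF ?d) k0"
    using chain[OF assms(1-3) delta_vecs[OF assms(4)]] by simp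
  also have "\<dots> = (\<Sum>k\<in>K0. dF k1 k * g0 b1 b0 k k0)"
    apply (subst mat_app_in[OF assms(5)])
    using assms finK1 by (auto simp: mat_app_delta intro!: sum.cong)
  finally show ?thesis .
qed

lemma surj_B: assumes "b0 \<in> I0" shows "\<exists>c\<in>vecs I1. \<forall>b\<in>I0. mat_app I1 I0 dB c b = (if b = b0 then 1 else 0)"
proof -
  have "(\<lambda>i. if i = b0 then 1 else 0) \<in> bounds I1 I0 dB"
    using H0B delta_vecs[OF assms] by auto
  then obtain c where c: "c \<in> vecs I1" "(\<lambda>i. if i = b0 then 1 else 0) = mat_app I1 I0 dB c"
    by (auto simp: bounds_def)
  have "\<forall>b\<in>I0. mat_app I1 I0 dB c b = (if b = b0 then 1 else 0)"
    using fun_cong[OF c(2)] by simp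
  with c(1) show ?thesis by blast
qed

lemma dBt_inj: assumes "\<forall>b1\<in>I1. (\<Sum>b\<in>I0. dB b1 b * t b) = 0" "b0 \<in> I0"
  shows "t b0 = 0"
proof -
  obtain c where c: "c \<in> vecs I1" "\<forall>b\<in>I0. mat_app I1 I0 dB c b = (if b = b0 then 1 else 0)"
    using surj_B[OF assms(2)] by blast
  have "t b0 = (\<Sum>b\<in>I0. (if b = b0 then 1 else 0) * t b)"
    using assms(2) finI0 by (simp add: sum_delta_l)
  also have "\<dots> = (\<Sum>b\<in>I0. (\<Sum>b1\<in>I1. c b1 * dB b1 b) * t b)"
    using c(2) by (auto simp: mat_app_in intro!: sum.cong)
  also have "\<dots> = (\<Sum>b\<in>I0. \<Sum>b1\<in>I1. c b1 * (dB b1 b * t b))"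
    by (simp add: sum_distrib_right mult.assoc)
  also have "\<dots> = (\<Sum>b1\<in>I1. \<Sum>b\<in>I0. c b1 * (dB b1 b * t b))"
    by (rule sum.swap)
  also have "\<dots> = (\<Sum>b1\<in>I1. c b1 * (\<Sum>b\<in>I0. dB b1 b * t b))"
    by (simp add: sum_distrib_left)
  also have "\<dots> = 0" using assms(1) by simp
  finally show ?thesis .
qed

definition e :: "'k0 \<Rightarrow> bit" where "e = (SOME e. e \<in> vecs K0 \<and> ev e = 1)"
lemma e: "e \<in> vecs K0" "ev e = 1"
  using someI_ex[of "\<lambda>e. e \<in> vecs K0 \<and> ev e = 1"] exists_e unfolding e_def by auto

lemma D0: assumes "\<forall>k1\<in>K1. (\<Sum>k\<in>K0. dF k1 k * l k) = 0" "k \<in> K0"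
  shows "l k = (\<Sum>k'\<in>K0. l k' * e k') * eps k"
proof -
  have orth: "(\<Sum>k\<in>K0. l k * mat_app K1 K0 dF a k) = 0" for a
  proof -
    have "(\<Sum>k\<in>K0. l k * mat_app K1 K0 dF a k) = (\<Sum>k\<in>K0. \<Sum>k1\<in>K1. a k1 * (dF k1 k * l k))"
      by (auto simp: mat_app_in sum_distrib_left mult_ac intro!: sum.cong)
    also have "\<dots> = (\<Sum>k1\<in>K1. a k1 * (\<Sum>k\<in>K0. dF k1 k * l k))"
      by (subst sum.swap) (simp add: sum_distrib_left)
    also have "\<dots> = 0" using assms(1) by simp
    finally show ?thesis .
  qed
  let ?y = "\<lambda>i. (if i = k then 1 else 0) + eps k * e i"
  have yv: "?y \<in> vecs K0" using e(1) assms(2) by (auto simp: vecs_def)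
  have "ev ?y = ev (\<lambda>i. if i = k then 1 else 0) + eps k * ev e"
    by (simp add: ev_add ev_smult)
  also have "ev (\<lambda>i. if i = k then 1 else 0) = eps k"
    using assms(2) finK0 by (simp add: ev_def sum_delta_l)
  finally have "ev ?y = 0" using e(2) by simp
  then obtain a where "?y = mat_app K1 K0 dF a" using exact_K0[OF yv] by blast
  then have "0 = (\<Sum>i\<in>K0. l i * ?y i)" using orth by metis
  also have "\<dots> = (\<Sum>i\<in>K0. l i * (if i = k then 1 else 0)) + eps k * (\<Sum>i\<in>K0. l i * e i)"
    by (simp add: distrib_left sum.distrib sum_distrib_left mult_ac)
  also have "(\<Sum>i\<in>K0. l i * (if i = k then 1 else 0)) = l k"
    using assms(2) finK0 by (simp add: sum_delta_r)
  finally have "l k + eps k * (\<Sum>i\<in>K0. l i * e i) = 0" by simp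
  then show ?thesis by (drule_tac bit_add_eq0) (simp add: mult.commute)
qed


lemma uvec: "x \<in> vecs C1 \<Longrightarrow> (\<lambda>k. x (Inl (b1,k))) \<in> vecs K0"
  by (auto simp: vecs_def tot_C1_def)
lemma wvec: "x \<in> vecs C1 \<Longrightarrow> (\<lambda>k. x (Inr (b0,k))) \<in> vecs K1"
  by (auto simp: vecs_def tot_C1_def)
lemma zvec: "z \<in> vecs (I1 \<times> K1) \<Longrightarrow> (\<lambda>k. z (b1,k)) \<in> vecs K1"
  by (auto simp: vecs_def)

lemma hom_cyc: assumes x: "x \<in> cycles C1 (I0 \<times> K0) d1"
  shows "mat_app C1 I1 (pi_lower eps) x \<in> cycles I1 I0 dB"
proof -
  have xv: "x \<in> vecs C1" using x by (simp add: cycles_def)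
  have "mat_app I1 I0 dB (mat_app C1 I1 (pi_lower eps) x) b0 = 0" for b0
  proof (cases "b0 \<in> I0")
    case b0: True
    let ?u = "\<lambda>b1 k. x (Inl (b1,k))"
    let ?w = "\<lambda>k. x (Inr (b0,k))"
    have "(\<lambda>k0. (\<Sum>b1\<in>I1. dB b1 b0 * mat_app K0 K0 (g0 b1 b0) (?u b1) k0) + mat_app K1 K0 dF ?w k0) = (\<lambda>_. 0)"
    proof
      fix k0 show "(\<Sum>b1\<in>I1. dB b1 b0 * mat_app K0 K0 (g0 b1 b0) (?u b1) k0) + mat_app K1 K0 dF ?w k0 = 0"
        using fun_cong[OF conjunct2[OF x[unfolded cycles_def, simplified]], of "(b0,k0)"] d1_formula[OF b0, of x k0]
        by simp
    qed
    then have "ev (\<lambda>k0. (\<Sum>b1\<in>I1. dB b1 b0 * mat_app K0 K0 (g0 b1 b0) (?u b1) k0) + mat_app K1 K0 dF ?w k0) = 0"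
      by (simp add: ev_zero)
    moreover have "ev (\<lambda>k0. (\<Sum>b1\<in>I1. dB b1 b0 * mat_app K0 K0 (g0 b1 b0) (?u b1) k0) + mat_app K1 K0 dF ?w k0)
       = (\<Sum>b1\<in>I1. dB b1 b0 * ev (mat_app K0 K0 (g0 b1 b0) (?u b1))) + ev (mat_app K1 K0 dF ?w)"
      by (simp add: ev_add ev_sum[OF finI1] ev_smult)
    moreover have "(\<Sum>b1\<in>I1. dB b1 b0 * ev (mat_app K0 K0 (g0 b1 b0) (?u b1))) = (\<Sum>b1\<in>I1. dB b1 b0 * ev (?u b1))"
    proof (rule sum.cong)
      fix b1 assume b1: "b1 \<in> I1"
      show "dB b1 b0 * ev (mat_app K0 K0 (g0 b1 b0) (?u b1)) = dB b1 b0 * ev (?u b1)"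
        using ev_g0[OF b1 b0 _ uvec[OF xv]] by (cases "dB b1 b0") auto
    qed simp
    moreover have "ev (mat_app K1 K0 dF ?w) = 0" using ev_dF[OF wvec[OF xv]] .
    moreover have "mat_app I1 I0 dB (mat_app C1 I1 (pi_lower eps) x) b0 = (\<Sum>b1\<in>I1. dB b1 b0 * ev (?u b1))"
      unfolding mat_app_in[OF b0] by (rule sum.cong) (auto simp: pil_formula mult.commute)
    ultimately show ?thesis by simp
  qed (simp add: mat_app_out)
  then show ?thesis by (auto simp: cycles_def)
qed

lemma hom_bnd: assumes y: "y \<in> bounds (I1 \<times> K1) C1 d2"
  shows "mat_app C1 I1 (pi_lower eps) y \<in> bounds ({}::unit set) I1 (\<lambda>_ _. 0)"
proof -
  obtain z where z: "z \<in> vecs (I1 \<times> K1)" "y = mat_app (I1 \<times> K1) C1 d2 z" using y by (auto simp: bounds_def)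
  have "mat_app C1 I1 (pi_lower eps) y b1 = 0" for b1
  proof (cases "b1 \<in> I1")
    case b1: True
    have "mat_app C1 I1 (pi_lower eps) y b1 = ev (mat_app K1 K0 dF (\<lambda>k1. z (b1,k1)))"
      using b1 by (simp add: pil_formula z(2) d2_Inl)
    also have "\<dots> = 0" by (rule ev_dF[OF zvec[OF z(1)]])
    finally show ?thesis .
  qed (simp add: mat_app_out)
  then show ?thesis by auto
qed

lemma hom_surj: assumes z: "z \<in> cycles I1 I0 dB"
  shows "\<exists>x\<in>cycles C1 (I0 \<times> K0) d1. (\<lambda>j. mat_app C1 I1 (pi_lower eps) x j - z j) \<in> bounds ({}::unit set) I1 (\<lambda>_ _. 0)"
proof -
  have zv: "z \<in> vecs I1" and zc: "mat_app I1 I0 dB z = (\<lambda>_. 0)" using z by (auto simp: cycles_def)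
  define h where "h b1 b0 = (SOME h. h \<in> vecs K1 \<and> mat_app K0 K0 (g0 b1 b0) e = (\<lambda>j. e j + mat_app K1 K0 dF h j))" for b1 b0
  have h: "mat_app K0 K0 (g0 b1 b0) e = (\<lambda>j. e j + mat_app K1 K0 dF (h b1 b0) j)"
    if "b1 \<in> I1" "b0 \<in> I0" "dB b1 b0 \<noteq> 0" for b1 b0
  proof -
    have "\<exists>h. h \<in> vecs K1 \<and> mat_app K0 K0 (g0 b1 b0) e = (\<lambda>j. e j + mat_app K1 K0 dF h j)"
      using g0_hom[OF that e(1)] by blast
    from someI_ex[OF this] show ?thesis unfolding h_def by blast
  qed
  define wx where "wx b0 k1 = (\<Sum>b1\<in>I1. dB b1 b0 * (z b1 * h b1 b0 k1))" for b0 k1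
  define x where "x = case_sum (\<lambda>(b1,k0). z b1 * e k0) (\<lambda>(b0,k1). if b0 \<in> I0 \<and> k1 \<in> K1 then wx b0 k1 else 0)"
  have xv: "x \<in> vecs C1"
    using zv e(1) by (auto simp: vecs_def x_def tot_C1_def split: sum.split)
  have d1x: "mat_app C1 (I0 \<times> K0) d1 x (b0,k0) = 0" if b0: "b0 \<in> I0" for b0 k0
  proof (cases "k0 \<in> K0")
    case k0: True
    have "mat_app C1 (I0 \<times> K0) d1 x (b0,k0) =
      (\<Sum>b1\<in>I1. dB b1 b0 * mat_app K0 K0 (g0 b1 b0) (\<lambda>k. z b1 * e k) k0) + mat_app K1 K0 dF (\<lambda>k. x (Inr (b0,k))) k0"
      using d1_formula[OF b0] by (simp add: x_def)
    also have "mat_app K1 K0 dF (\<lambda>k. x (Inr (b0,k))) = mat_app K1 K0 dF (\<lambda>k. \<Sum>b1\<in>I1. dB b1 b0 * z b1 * h b1 b0 k)"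
      by (rule mat_app_cong) (simp add: x_def wx_def b0 mult.assoc)
    also have "\<dots> k0 = (\<Sum>b1\<in>I1. dB b1 b0 * z b1 * mat_app K1 K0 dF (h b1 b0) k0)"
      by (simp add: mat_app_sum[OF finI1] mat_app_smult)
    also have "(\<Sum>b1\<in>I1. dB b1 b0 * mat_app K0 K0 (g0 b1 b0) (\<lambda>k. z b1 * e k) k0)
       = (\<Sum>b1\<in>I1. z b1 * dB b1 b0 * e k0 + dB b1 b0 * z b1 * mat_app K1 K0 dF (h b1 b0) k0)"
    proof (rule sum.cong)
      fix b1 assume b1: "b1 \<in> I1"
      show "dB b1 b0 * mat_app K0 K0 (g0 b1 b0) (\<lambda>k. z b1 * e k) k0
         = z b1 * dB b1 b0 * e k0 + dB b1 b0 * z b1 * mat_app K1 K0 dF (h b1 b0) k0"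
      proof (cases "dB b1 b0 = 0")
        case False
        then show ?thesis using h[OF b1 b0 False] by (simp add: mat_app_smult distrib_left mult_ac)
      qed simp
    qed simp
    also have "\<dots> = (\<Sum>b1\<in>I1. z b1 * dB b1 b0) * e k0 + (\<Sum>b1\<in>I1. dB b1 b0 * z b1 * mat_app K1 K0 dF (h b1 b0) k0)"
      by (simp add: sum.distrib sum_distrib_right)
    also have "(\<Sum>b1\<in>I1. z b1 * dB b1 b0) = 0"
      using fun_cong[OF zc, of b0] b0 by (simp add: mat_app_in)
    finally show ?thesis by (simp add: add.assoc)
  qed (simp add: mat_app_out)
  have "mat_app C1 (I0 \<times> K0) d1 x p = 0" for p
  proof (cases p)
    case (Pair a b) then show ?thesis using d1x[of a b] by (cases "a \<in> I0") (auto simp: mat_app_out)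
  qed
  then have xc: "x \<in> cycles C1 (I0 \<times> K0) d1"
    using xv by (auto simp: cycles_def)
  have "mat_app C1 I1 (pi_lower eps) x j - z j = 0" for j
  proof (cases "j \<in> I1")
    case True
    have "mat_app C1 I1 (pi_lower eps) x j = ev (\<lambda>k. z j * e k)"
      using True by (simp add: pil_formula x_def)
    also have "\<dots> = z j" by (simp add: ev_smult e(2))
    finally show ?thesis by simp
  next
    case False then show ?thesis using zv by (simp add: mat_app_out vecsD)
  qed
  then show ?thesis using xc by auto
qed

lemma hom_inj: assumes x: "x \<in> cycles C1 (I0 \<times> K0) d1"
    and px: "mat_app C1 I1 (pi_lower eps) x \<in> bounds ({}::unit set) I1 (\<lambda>_ _. 0)"
  shows "x \<in> bounds (I1 \<times> K1) C1 d2"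
proof -
  have xv: "x \<in> vecs C1" and xc: "mat_app C1 (I0 \<times> K0) d1 x = (\<lambda>_. 0)" using x by (auto simp: cycles_def)
  let ?u = "\<lambda>b1 k. x (Inl (b1,k))"
  let ?w = "\<lambda>b0 k. x (Inr (b0,k))"
  have evu: "ev (?u b1) = 0" if "b1 \<in> I1" for b1
    using fun_cong[of _ _ b1] px pil_formula[OF that, of x] by auto
  define a where "a b1 = (if b1 \<in> I1 then (SOME a. a \<in> vecs K1 \<and> ?u b1 = mat_app K1 K0 dF a) else (\<lambda>_. 0))" for b1
  have a: "a b1 \<in> vecs K1 \<and> ?u b1 = mat_app K1 K0 dF (a b1)" if "b1 \<in> I1" for b1
  proof -
    have "\<exists>a. a \<in> vecs K1 \<and> ?u b1 = mat_app K1 K0 dF a" using exact_K0[OF uvec[OF xv] evu[OF that]] by blast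
    from someI_ex[OF this] show ?thesis using that unfolding a_def by simp
  qed
  have av: "a b1 \<in> vecs K1" for b1 using a[of b1] by (cases "b1 \<in> I1") (auto simp: a_def vecs_def)
  define w' where "w' b0 k = ?w b0 k + (\<Sum>b1\<in>I1. dB b1 b0 * mat_app K1 K1 (g1 b1 b0) (a b1) k)" for b0 k
  have w'v: "w' b0 \<in> vecs K1" for b0
    using wvec[OF xv, of b0] by (auto simp: vecs_def w'_def mat_app_out)
  have w'c: "mat_app K1 K0 dF (w' b0) = (\<lambda>_. 0)" if b0: "b0 \<in> I0" for b0
  proof
    fix k0
    have "mat_app K1 K0 dF (w' b0) k0 = mat_app K1 K0 dF (?w b0) k0 + (\<Sum>b1\<in>I1. dB b1 b0 * mat_app K1 K0 dF (mat_app K1 K1 (g1 b1 b0) (a b1)) k0)"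
      unfolding w'_def by (simp add: mat_app_add mat_app_sum[OF finI1] mat_app_smult)
    also have "(\<Sum>b1\<in>I1. dB b1 b0 * mat_app K1 K0 dF (mat_app K1 K1 (g1 b1 b0) (a b1)) k0)
      = (\<Sum>b1\<in>I1. dB b1 b0 * mat_app K0 K0 (g0 b1 b0) (?u b1) k0)"
    proof (rule sum.cong)
      fix b1 assume b1: "b1 \<in> I1"
      show "dB b1 b0 * mat_app K1 K0 dF (mat_app K1 K1 (g1 b1 b0) (a b1)) k0 = dB b1 b0 * mat_app K0 K0 (g0 b1 b0) (?u b1) k0"
      proof (cases "dB b1 b0 = 0")
        case False
        then show ?thesis using chain[OF b1 b0 False av] a[OF b1] by simp
      qed simp
    qed simp
    also have "mat_app K1 K0 dF (?w b0) k0 + (\<Sum>b1\<in>I1. dB b1 b0 * mat_app K0 K0 (g0 b1 b0) (?u b1) k0)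
       = mat_app C1 (I0 \<times> K0) d1 x (b0,k0)"
      using d1_formula[OF b0] by (simp add: add.commute)
    also have "\<dots> = 0" using xc by simp
    finally show "mat_app K1 K0 dF (w' b0) k0 = 0" .
  qed
  define c where "c b0 = (SOME c. c \<in> vecs I1 \<and> (\<forall>b\<in>I0. mat_app I1 I0 dB c b = (if b = b0 then 1 else 0)))" for b0
  have c: "c b0 \<in> vecs I1 \<and> (\<forall>b\<in>I0. mat_app I1 I0 dB (c b0) b = (if b = b0 then 1 else 0))" if "b0 \<in> I0" for b0
  proof -
    have "\<exists>c. c \<in> vecs I1 \<and> (\<forall>b\<in>I0. mat_app I1 I0 dB c b = (if b = b0 then 1 else 0))"
      using surj_B[OF that] by blast
    from someI_ex[OF this] show ?thesis unfolding c_def .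
  qed
  define yy where "yy b1 k1 = a b1 k1 + (\<Sum>b0\<in>I0. c b0 b1 * w' b0 k1)" for b1 k1
  define y where "y = (\<lambda>(b1,k1). if b1 \<in> I1 \<and> k1 \<in> K1 then yy b1 k1 else 0)"
  have yv: "y \<in> vecs (I1 \<times> K1)" by (auto simp: vecs_def y_def)
  have yr: "mat_app K1 T M (\<lambda>k1. y (b1,k1)) = mat_app K1 T M (yy b1)" if "b1 \<in> I1" for b1 T M
    by (rule mat_app_cong) (simp add: y_def that)
  have "x p = mat_app (I1 \<times> K1) C1 d2 y p" for p
  proof (cases "p \<in> C1")
    case False then show ?thesis using xv by (simp add: mat_app_out vecsD)
  next
    case True
    then consider (L) b1 k0 where "p = Inl (b1,k0)" "b1 \<in> I1" "k0 \<in> K0"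
      | (R) b0 k1 where "p = Inr (b0,k1)" "b0 \<in> I0" "k1 \<in> K1" by (auto simp: tot_C1_def)
    then show ?thesis
    proof cases
      case L
      have "mat_app (I1 \<times> K1) C1 d2 y p = mat_app K1 K0 dF (yy b1) k0"
        using L by (simp add: d2_Inl yr)
      also have "\<dots> = mat_app K1 K0 dF (a b1) k0 + (\<Sum>b0\<in>I0. c b0 b1 * mat_app K1 K0 dF (w' b0) k0)"
        unfolding yy_def by (simp add: mat_app_add mat_app_sum[OF finI0] mat_app_smult)
      also have "(\<Sum>b0\<in>I0. c b0 b1 * mat_app K1 K0 dF (w' b0) k0) = 0"
        using w'c by simp
      moreover have "x (Inl (b1,k0)) = mat_app K1 K0 dF (a b1) k0"
        using fun_cong[OF conjunct2[OF a[OF L(2)]], of k0] by simp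
      ultimately show ?thesis using L by simp
    next
      case R
      have "mat_app (I1 \<times> K1) C1 d2 y p = (\<Sum>b1\<in>I1. dB b1 b0 * mat_app K1 K1 (g1 b1 b0) (yy b1) k1)"
        using R by (simp add: d2_Inr yr)
      also have "\<dots> = (\<Sum>b1\<in>I1. dB b1 b0 * mat_app K1 K1 (g1 b1 b0) (a b1) k1 + (\<Sum>b0'\<in>I0. c b0' b1 * dB b1 b0 * w' b0' k1))"
      proof (rule sum.cong)
        fix b1 assume b1: "b1 \<in> I1"
        have "mat_app K1 K1 (g1 b1 b0) (yy b1) k1 = mat_app K1 K1 (g1 b1 b0) (a b1) k1 + (\<Sum>b0'\<in>I0. c b0' b1 * mat_app K1 K1 (g1 b1 b0) (w' b0') k1)"
          unfolding yy_def by (simp add: mat_app_add mat_app_sum[OF finI0] mat_app_smult)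
        then show "dB b1 b0 * mat_app K1 K1 (g1 b1 b0) (yy b1) k1 = dB b1 b0 * mat_app K1 K1 (g1 b1 b0) (a b1) k1 + (\<Sum>b0'\<in>I0. c b0' b1 * dB b1 b0 * w' b0' k1)"
        proof (cases "dB b1 b0 = 0")
          case False
          have "mat_app K1 K1 (g1 b1 b0) (w' b0') = w' b0'" if "b0' \<in> I0" for b0'
            using g1_fix[OF b1 R(2) False w'v w'c[OF that]] .
          then have "(\<Sum>b0'\<in>I0. c b0' b1 * mat_app K1 K1 (g1 b1 b0) (w' b0') k1) = (\<Sum>b0'\<in>I0. c b0' b1 * w' b0' k1)"
            by (intro sum.cong) auto
          then show ?thesis using False
            by (simp add: \<open>mat_app K1 K1 (g1 b1 b0) (yy b1) k1 = _\<close>)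
        qed simp
      qed simp
      also have "\<dots> = (\<Sum>b1\<in>I1. dB b1 b0 * mat_app K1 K1 (g1 b1 b0) (a b1) k1) + (\<Sum>b0'\<in>I0. (\<Sum>b1\<in>I1. c b0' b1 * dB b1 b0) * w' b0' k1)"
        by (simp add: sum.distrib sum_distrib_right) (rule sum.swap)
      also have "(\<Sum>b0'\<in>I0. (\<Sum>b1\<in>I1. c b0' b1 * dB b1 b0) * w' b0' k1) = (\<Sum>b0'\<in>I0. (if b0' = b0 then 1 else 0) * w' b0' k1)"
      proof (rule sum.cong)
        fix b0' assume b0': "b0' \<in> I0"
        have "(\<Sum>b1\<in>I1. c b0' b1 * dB b1 b0) = mat_app I1 I0 dB (c b0') b0" using R(2) by (simp add: mat_app_in)
        also have "\<dots> = (if b0 = b0' then 1 else 0)" using c[OF b0'] R(2) by simp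
        finally show "(\<Sum>b1\<in>I1. c b0' b1 * dB b1 b0) * w' b0' k1 = (if b0' = b0 then 1 else 0) * w' b0' k1" by auto
      qed simp
      also have "\<dots> = w' b0 k1" using sum_delta_l[OF finI0 R(2)] .
      finally show ?thesis using R unfolding w'_def by (simp add: add.assoc[symmetric])
    qed
  qed
  then show ?thesis using yv unfolding bounds_def by auto
qed

lemma ev_g0_delta: assumes "b1 \<in> I1" "b0 \<in> I0" "dB b1 b0 \<noteq> 0" "k0 \<in> K0"
  shows "(\<Sum>k\<in>K0. g0 b1 b0 k0 k * eps k) = eps k0"
proof -
  let ?d = "\<lambda>i. if i = k0 then 1 else 0"
  have "(\<Sum>k\<in>K0. g0 b1 b0 k0 k * eps k) = ev (mat_app K0 K0 (g0 b1 b0) ?d)"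
    unfolding ev_def using assms finK0 by (intro sum.cong) (auto simp: mat_app_delta)
  also have "\<dots> = ev ?d" by (rule ev_g0[OF assms(1-3) delta_vecs[OF assms(4)]])
  also have "\<dots> = eps k0" unfolding ev_def using sum_delta_l[OF finK0 assms(4)] .
  finally show ?thesis .
qed

lemma coh_cyc: assumes "\<beta> \<in> cycles I1 ({}::unit set) (\<lambda>_ _. 0)"
  shows "mat_app I1 C1 (pi_upper eps) \<beta> \<in> cycles C1 (I1 \<times> K1) (transp d2)"
proof -
  have "mat_app C1 (I1 \<times> K1) (transp d2) (mat_app I1 C1 (pi_upper eps) \<beta>) p = 0" for p
  proof (cases "p \<in> I1 \<times> K1")
    case True
    then obtain b1 k1 where p: "p = (b1,k1)" "b1 \<in> I1" "k1 \<in> K1" by auto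
    have "mat_app C1 (I1 \<times> K1) (transp d2) (mat_app I1 C1 (pi_upper eps) \<beta>) p
       = (\<Sum>k\<in>K0. \<beta> b1 * eps k * dF k1 k)"
      using p by (simp add: d2t_formula piu_Inl piu_Inr)
    also have "\<dots> = \<beta> b1 * (\<Sum>k\<in>K0. dF k1 k * eps k)" by (simp add: sum_distrib_left mult_ac)
    also have "\<dots> = 0" using ev_dF_delta[OF p(3)] by simp
    finally show ?thesis .
  qed (simp add: mat_app_out)
  then show ?thesis by (auto simp: cycles_def)
qed

lemma coh_bnd: assumes "\<beta> \<in> bounds I0 I1 (transp dB)"
  shows "mat_app I1 C1 (pi_upper eps) \<beta> \<in> bounds (I0 \<times> K0) C1 (transp d1)"
proof -
  obtain v where v: "v \<in> vecs I0" "\<beta> = mat_app I0 I1 (transp dB) v" using assms by (auto simp: bounds_def)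
  define V where "V = (\<lambda>(b0,k). if k \<in> K0 then v b0 * eps k else 0)"
  have Vv: "V \<in> vecs (I0 \<times> K0)" using v(1) by (auto simp: vecs_def V_def)
  have "mat_app I1 C1 (pi_upper eps) \<beta> p = mat_app (I0 \<times> K0) C1 (transp d1) V p" for p
  proof (cases "p \<in> C1")
    case False then show ?thesis by (simp add: mat_app_out)
  next
    case True
    then consider (L) b1 k0 where "p = Inl (b1,k0)" "b1 \<in> I1" "k0 \<in> K0"
      | (R) b0 k1 where "p = Inr (b0,k1)" "b0 \<in> I0" "k1 \<in> K1" by (auto simp: tot_C1_def)
    then show ?thesis
    proof cases
      case L
      have "mat_app (I0 \<times> K0) C1 (transp d1) V p = (\<Sum>b0\<in>I0. dB b1 b0 * (\<Sum>k\<in>K0. V (b0,k) * g0 b1 b0 k0 k))"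
        using L by (simp add: d1t_Inl)
      also have "\<dots> = (\<Sum>b0\<in>I0. dB b1 b0 * (v b0 * eps k0))"
      proof (rule sum.cong)
        fix b0 assume b0: "b0 \<in> I0"
        have "(\<Sum>k\<in>K0. V (b0,k) * g0 b1 b0 k0 k) = v b0 * (\<Sum>k\<in>K0. g0 b1 b0 k0 k * eps k)"
          by (auto simp: V_def sum_distrib_left mult_ac intro!: sum.cong)
        then show "dB b1 b0 * (\<Sum>k\<in>K0. V (b0,k) * g0 b1 b0 k0 k) = dB b1 b0 * (v b0 * eps k0)"
          using ev_g0_delta[OF L(2) b0 _ L(3)] by (cases "dB b1 b0 = 0") auto
      qed simp
      also have "\<dots> = \<beta> b1 * eps k0"
        using L(2) unfolding v(2) mat_app_in[OF L(2)] transp_def sum_distrib_right by (simp add: mult_ac)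
      finally show ?thesis using L by (simp add: piu_Inl)
    next
      case R
      have "mat_app (I0 \<times> K0) C1 (transp d1) V p = (\<Sum>k\<in>K0. V (b0,k) * dF k1 k)"
        using R by (simp add: d1t_Inr)
      also have "\<dots> = v b0 * (\<Sum>k\<in>K0. dF k1 k * eps k)"
        by (auto simp: V_def sum_distrib_left mult_ac intro!: sum.cong)
      also have "\<dots> = 0" using ev_dF_delta[OF R(3)] by simp
      finally show ?thesis using R by (simp add: piu_Inr)
    qed
  qed
  then show ?thesis using Vv unfolding bounds_def by auto
qed

lemma coh_inj: assumes "\<beta> \<in> cycles I1 ({}::unit set) (\<lambda>_ _. 0)"
    and b: "mat_app I1 C1 (pi_upper eps) \<beta> \<in> bounds (I0 \<times> K0) C1 (transp d1)"
  shows "\<beta> \<in> bounds I0 I1 (transp dB)"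
proof -
  have \<beta>v: "\<beta> \<in> vecs I1" using assms(1) by simp
  obtain V where V: "V \<in> vecs (I0 \<times> K0)" "mat_app I1 C1 (pi_upper eps) \<beta> = mat_app (I0 \<times> K0) C1 (transp d1) V"
    using b by (auto simp: bounds_def)
  define v where "v b0 = (if b0 \<in> I0 then (\<Sum>k'\<in>K0. V (b0,k') * e k') else 0)" for b0
  have vv: "v \<in> vecs I0" by (auto simp: vecs_def v_def)
  have Vform: "V (b0,k) = v b0 * eps k" if b0: "b0 \<in> I0" and k: "k \<in> K0" for b0 k
  proof -
    have "\<forall>k1\<in>K1. (\<Sum>k\<in>K0. dF k1 k * V (b0,k)) = 0"
    proof
      fix k1 assume k1: "k1 \<in> K1"
      have "(\<Sum>k\<in>K0. dF k1 k * V (b0,k)) = mat_app (I0 \<times> K0) C1 (transp d1) V (Inr (b0,k1))"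
        using b0 k1 by (simp add: d1t_Inr mult.commute)
      also have "\<dots> = 0" unfolding V(2)[symmetric] by (simp add: piu_Inr)
      finally show "(\<Sum>k\<in>K0. dF k1 k * V (b0,k)) = 0" .
    qed
    from D0[OF this k] show ?thesis using b0 by (simp add: v_def)
  qed
  obtain ks where ks: "ks \<in> K0" "eps ks = 1"
  proof -
    have "\<exists>k\<in>K0. eps k \<noteq> 0"
    proof (rule ccontr)
      assume "\<not> ?thesis"
      then have "ev e = 0" by (simp add: ev_def)
      then show False using e(2) by simp
    qed
    then show ?thesis using that by auto
  qed
  have "\<beta> b1 = mat_app I0 I1 (transp dB) v b1" for b1
  proof (cases "b1 \<in> I1")
    case False then show ?thesis using \<beta>v by (simp add: mat_app_out vecsD)
  next
    case b1: True
    have "\<beta> b1 = mat_app I1 C1 (pi_upper eps) \<beta> (Inl (b1,ks))" using b1 ks by (simp add: piu_Inl)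
    also have "\<dots> = (\<Sum>b0\<in>I0. dB b1 b0 * (\<Sum>k\<in>K0. V (b0,k) * g0 b1 b0 ks k))"
      unfolding V(2) using b1 ks by (simp add: d1t_Inl)
    also have "\<dots> = (\<Sum>b0\<in>I0. v b0 * dB b1 b0)"
    proof (rule sum.cong)
      fix b0 assume b0: "b0 \<in> I0"
      have "(\<Sum>k\<in>K0. V (b0,k) * g0 b1 b0 ks k) = v b0 * (\<Sum>k\<in>K0. g0 b1 b0 ks k * eps k)"
        using b0 by (auto simp: Vform sum_distrib_left mult_ac intro!: sum.cong)
      then show "dB b1 b0 * (\<Sum>k\<in>K0. V (b0,k) * g0 b1 b0 ks k) = v b0 * dB b1 b0"
        using ev_g0_delta[OF b1 b0 _ ks(1)] ks(2) by (cases "dB b1 b0 = 0") (auto simp: mult.commute)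
    qed simp
    also have "\<dots> = mat_app I0 I1 (transp dB) v b1" using b1 by (simp add: mat_app_in transp_def)
    finally show ?thesis .
  qed
  then show ?thesis using vv unfolding bounds_def by auto
qed

lemma coh_surj: assumes psi: "\<psi> \<in> cycles C1 (I1 \<times> K1) (transp d2)"
  shows "\<exists>\<beta>\<in>cycles I1 ({}::unit set) (\<lambda>_ _. 0). (\<lambda>j. mat_app I1 C1 (pi_upper eps) \<beta> j - \<psi> j) \<in> bounds (I0 \<times> K0) C1 (transp d1)"
proof -
  have \<psi>v: "\<psi> \<in> vecs C1" and \<psi>c: "mat_app C1 (I1 \<times> K1) (transp d2) \<psi> = (\<lambda>_. 0)" using psi by (auto simp: cycles_def)
  have cocyc: "(\<Sum>k\<in>K0. \<psi> (Inl (b1,k)) * dF k1 k) + (\<Sum>b0\<in>I0. dB b1 b0 * (\<Sum>k\<in>K1. \<psi> (Inr (b0,k)) * g1 b1 b0 k1 k)) = 0"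
    if "b1 \<in> I1" "k1 \<in> K1" for b1 k1
    using fun_cong[OF \<psi>c, of "(b1,k1)"] d2t_formula[OF that, of \<psi>] by simp
  have step1: "\<forall>y\<in>vecs K1. (\<forall>j\<in>K0. (\<Sum>i\<in>K1. y i * dF i j) = 0) \<longrightarrow> (\<Sum>i\<in>K1. \<psi> (Inr (b0,i)) * y i) = 0"
    if b0: "b0 \<in> I0" for b0
  proof (intro ballI impI)
    fix y assume yv: "y \<in> vecs K1" and yk: "\<forall>j\<in>K0. (\<Sum>i\<in>K1. y i * dF i j) = 0"
    have ykf: "mat_app K1 K0 dF y = (\<lambda>_. 0)"
      by (rule ext) (simp add: mat_app_def yk)
    define t where "t b = (\<Sum>i\<in>K1. \<psi> (Inr (b,i)) * y i)" for b
    have "\<forall>b1\<in>I1. (\<Sum>b\<in>I0. dB b1 b * t b) = 0"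
    proof
      fix b1 assume b1: "b1 \<in> I1"
      have "0 = (\<Sum>k1\<in>K1. y k1 * ((\<Sum>k\<in>K0. \<psi> (Inl (b1,k)) * dF k1 k) + (\<Sum>b0\<in>I0. dB b1 b0 * (\<Sum>k\<in>K1. \<psi> (Inr (b0,k)) * g1 b1 b0 k1 k))))"
        using cocyc[OF b1] by simp
      also have "\<dots> = (\<Sum>k1\<in>K1. y k1 * (\<Sum>k\<in>K0. \<psi> (Inl (b1,k)) * dF k1 k)) + (\<Sum>k1\<in>K1. \<Sum>b0\<in>I0. dB b1 b0 * (y k1 * (\<Sum>k\<in>K1. \<psi> (Inr (b0,k)) * g1 b1 b0 k1 k)))"
        by (simp add: distrib_left sum.distrib sum_distrib_left mult_ac)
      also have "(\<Sum>k1\<in>K1. \<Sum>b0\<in>I0. dB b1 b0 * (y k1 * (\<Sum>k\<in>K1. \<psi> (Inr (b0,k)) * g1 b1 b0 k1 k)))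
         = (\<Sum>b0\<in>I0. dB b1 b0 * (\<Sum>k1\<in>K1. y k1 * (\<Sum>k\<in>K1. \<psi> (Inr (b0,k)) * g1 b1 b0 k1 k)))"
        by (subst sum.swap) (simp add: sum_distrib_left)
      also have "(\<Sum>k1\<in>K1. y k1 * (\<Sum>k\<in>K0. \<psi> (Inl (b1,k)) * dF k1 k)) = 0"
        unfolding swap_pair[OF finK1 finK0] ykf by simp
      also have "(\<Sum>b0\<in>I0. dB b1 b0 * (\<Sum>k1\<in>K1. y k1 * (\<Sum>k\<in>K1. \<psi> (Inr (b0,k)) * g1 b1 b0 k1 k)))
          = (\<Sum>b0\<in>I0. dB b1 b0 * t b0)"
      proof (rule sum.cong)
        fix b0 assume b0: "b0 \<in> I0"
        show "dB b1 b0 * (\<Sum>k1\<in>K1. y k1 * (\<Sum>k\<in>K1. \<psi> (Inr (b0,k)) * g1 b1 b0 k1 k)) = dB b1 b0 * t b0"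
        proof (cases "dB b1 b0 = 0")
          case False
          show ?thesis unfolding swap_pair[OF finK1 finK1] g1_fix[OF b1 b0 False yv ykf] t_def by simp
        qed simp
      qed simp
      finally show "(\<Sum>b\<in>I0. dB b1 b * t b) = 0" by simp
    qed
    from dBt_inj[OF this b0] show "(\<Sum>i\<in>K1. \<psi> (Inr (b0,i)) * y i) = 0" by (simp add: t_def)
  qed
  define V0 where "V0 b0 = (SOME f. \<forall>i\<in>K1. \<psi> (Inr (b0,i)) = (\<Sum>j\<in>K0. f j * dF i j))" for b0
  have V0: "\<forall>i\<in>K1. \<psi> (Inr (b0,i)) = (\<Sum>j\<in>K0. V0 b0 j * dF i j)" if "b0 \<in> I0" for b0
  proof -
    have "\<exists>f. \<forall>i\<in>K1. \<psi> (Inr (b0,i)) = (\<Sum>j\<in>K0. f j * dF i j)"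
      using dual[OF finK1 finK0 step1[OF that]] by simp
    from someI_ex[OF this] show ?thesis unfolding V0_def .
  qed
  define V where "V = (\<lambda>(b0,k). if b0 \<in> I0 \<and> k \<in> K0 then V0 b0 k else 0)"
  have Vv: "V \<in> vecs (I0 \<times> K0)" by (auto simp: vecs_def V_def)
  define D where "D b1 k = (\<Sum>b0\<in>I0. dB b1 b0 * (\<Sum>k'\<in>K0. V (b0,k') * g0 b1 b0 k k'))" for b1 k
  define l where "l b1 k = \<psi> (Inl (b1,k)) + D b1 k" for b1 k
  have lker: "\<forall>k1\<in>K1. (\<Sum>k\<in>K0. dF k1 k * l b1 k) = 0" if b1: "b1 \<in> I1" for b1
  proof
    fix k1 assume k1: "k1 \<in> K1"
    have "(\<Sum>k\<in>K0. dF k1 k * D b1 k) = (\<Sum>b0\<in>I0. dB b1 b0 * (\<Sum>k\<in>K0. dF k1 k * (\<Sum>k'\<in>K0. V (b0,k') * g0 b1 b0 k k')))"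
      unfolding D_def by (simp add: sum_distrib_left mult_ac) (rule sum.swap)
    also have "\<dots> = (\<Sum>b0\<in>I0. dB b1 b0 * (\<Sum>k\<in>K1. \<psi> (Inr (b0,k)) * g1 b1 b0 k1 k))"
    proof (rule sum.cong)
      fix b0 assume b0: "b0 \<in> I0"
      show "dB b1 b0 * (\<Sum>k\<in>K0. dF k1 k * (\<Sum>k'\<in>K0. V (b0,k') * g0 b1 b0 k k')) = dB b1 b0 * (\<Sum>k\<in>K1. \<psi> (Inr (b0,k)) * g1 b1 b0 k1 k)"
      proof (cases "dB b1 b0 = 0")
        case False
        have "(\<Sum>k\<in>K0. dF k1 k * (\<Sum>k'\<in>K0. V (b0,k') * g0 b1 b0 k k')) = (\<Sum>k'\<in>K0. V (b0,k') * (\<Sum>k\<in>K0. dF k1 k * g0 b1 b0 k k'))"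
          by (rule swap2)
        also have "\<dots> = (\<Sum>k'\<in>K0. V0 b0 k' * (\<Sum>k\<in>K1. g1 b1 b0 k1 k * dF k k'))"
          using chain_entry[OF b1 b0 False k1] b0 by (auto simp: V_def intro!: sum.cong)
        also have "\<dots> = (\<Sum>k\<in>K1. g1 b1 b0 k1 k * (\<Sum>k'\<in>K0. V0 b0 k' * dF k k'))"
          by (rule swap2)
        also have "\<dots> = (\<Sum>k\<in>K1. \<psi> (Inr (b0,k)) * g1 b1 b0 k1 k)"
          using V0[OF b0] by (auto simp: mult.commute intro!: sum.cong)
        finally show ?thesis by simp
      qed simp
    qed simp
    finally have "(\<Sum>k\<in>K0. dF k1 k * D b1 k) = (\<Sum>b0\<in>I0. dB b1 b0 * (\<Sum>k\<in>K1. \<psi> (Inr (b0,k)) * g1 b1 b0 k1 k))" .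
    moreover have "(\<Sum>k\<in>K0. dF k1 k * l b1 k) = (\<Sum>k\<in>K0. \<psi> (Inl (b1,k)) * dF k1 k) + (\<Sum>k\<in>K0. dF k1 k * D b1 k)"
      unfolding l_def by (simp add: distrib_left sum.distrib mult.commute)
    ultimately show "(\<Sum>k\<in>K0. dF k1 k * l b1 k) = 0" using cocyc[OF b1 k1] by simp
  qed
  define \<beta> where "\<beta> b1 = (if b1 \<in> I1 then (\<Sum>k'\<in>K0. l b1 k' * e k') else 0)" for b1
  have \<beta>v: "\<beta> \<in> vecs I1" by (auto simp: vecs_def \<beta>_def)
  have lform: "l b1 k = \<beta> b1 * eps k" if "b1 \<in> I1" "k \<in> K0" for b1 k
    using D0[OF lker[OF that(1)] that(2)] that(1) by (simp add: \<beta>_def)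
  have "\<psi> p - mat_app I1 C1 (pi_upper eps) \<beta> p = mat_app (I0 \<times> K0) C1 (transp d1) V p" for p
  proof (cases "p \<in> C1")
    case False then show ?thesis using \<psi>v by (simp add: mat_app_out vecsD)
  next
    case True
    then consider (L) b1 k0 where "p = Inl (b1,k0)" "b1 \<in> I1" "k0 \<in> K0"
      | (R) b0 k1 where "p = Inr (b0,k1)" "b0 \<in> I0" "k1 \<in> K1" by (auto simp: tot_C1_def)
    then show ?thesis
    proof cases
      case L
      have "mat_app (I0 \<times> K0) C1 (transp d1) V p = D b1 k0"
        using L by (simp add: d1t_Inl D_def)
      moreover have "\<psi> (Inl (b1,k0)) + D b1 k0 = \<beta> b1 * eps k0" using lform[OF L(2,3)] by (simp add: l_def)
      then have "D b1 k0 = \<psi> (Inl (b1,k0)) + \<beta> b1 * eps k0"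
        by (subst (asm) add.commute) (rule bit_eq_add)
      ultimately show ?thesis using L by (simp add: piu_Inl)
    next
      case R
      have "mat_app (I0 \<times> K0) C1 (transp d1) V p = (\<Sum>k\<in>K0. V0 b0 k * dF k1 k)"
        using R by (auto simp: d1t_Inr V_def intro!: sum.cong)
      also have "\<dots> = \<psi> (Inr (b0,k1))" using V0[OF R(2)] R(3) by simp
      finally show ?thesis using R by (simp add: piu_Inr)
    qed
  qed
  then have "(\<lambda>j. \<psi> j - mat_app I1 C1 (pi_upper eps) \<beta> j) \<in> bounds (I0 \<times> K0) C1 (transp d1)"
    using Vv unfolding bounds_def by (auto simp: fun_eq_iff)
  moreover have "(\<lambda>j. mat_app I1 C1 (pi_upper eps) \<beta> j - \<psi> j) = (\<lambda>j. \<psi> j - mat_app I1 C1 (pi_upper eps) \<beta> j)"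
    by (simp add: add.commute)
  ultimately have "(\<lambda>j. mat_app I1 C1 (pi_upper eps) \<beta> j - \<psi> j) \<in> bounds (I0 \<times> K0) C1 (transp d1)"
    by simp
  then show ?thesis using \<beta>v by auto
qed
end

theorem mainTheorem3:
  fixes I1 :: "'b1 set" and I0 :: "'b0 set" and K1 :: "'k1 set" and K0 :: "'k0 set"
    and dB :: "'b1 \<Rightarrow> 'b0 \<Rightarrow> bit" and dF :: "'k1 \<Rightarrow> 'k0 \<Rightarrow> bit"
    and phi :: "'b1 \<Rightarrow> 'b0 \<Rightarrow> ('k1 \<Rightarrow> 'k1 \<Rightarrow> bit) \<times> ('k0 \<Rightarrow> 'k0 \<Rightarrow> bit)"
    and eps :: "'k0 \<Rightarrow> bit"
  assumes fin: "finite I1" "finite I0" "finite K1" "finite K0"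
    and conn: "is_connection I1 I0 dB K1 K0 dF phi"
    and triv_H0: "\<forall>b1\<in>I1. \<forall>b0\<in>I0. dB b1 b0 \<noteq> 0 \<longrightarrow>
          induces_identity_on_homology K1 K0 ({} :: unit set) dF (\<lambda>_ _. 0) (snd (phi b1 b0))"
    and triv_H1: "\<forall>b1\<in>I1. \<forall>b0\<in>I0. dB b1 b0 \<noteq> 0 \<longrightarrow>
          induces_identity_on_homology ({} :: unit set) K1 K0 (\<lambda>_ _. 0) dF (fst (phi b1 b0))"
    and aug: "\<forall>v\<in>vecs K1. mat_app K0 (UNIV :: unit set) (\<lambda>k _. eps k) (mat_app K1 K0 dF v) = (\<lambda>_. 0)"
    and aug_iso: "induces_homology_iso K1 K0 ({} :: unit set) dF (\<lambda>_ _. 0)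
          ({} :: unit set) (UNIV :: unit set) ({} :: unit set) (\<lambda>_ _. 0) (\<lambda>_ _. 0) (\<lambda>k _. eps k)"
    and H0B: "cycles I0 ({} :: unit set) (\<lambda>_ _. 0) \<subseteq> bounds I1 I0 dB"
  shows "induces_homology_iso
           (I1 \<times> K1) (tot_C1 I1 I0 K1 K0) (I0 \<times> K0) (tot_d2 dB dF phi) (tot_d1 dB dF phi)
           ({} :: unit set) I1 I0 (\<lambda>_ _. 0) dB
           (pi_lower eps)
       \<and> induces_homology_iso
           I0 I1 ({} :: unit set) (transp dB) (\<lambda>_ _. 0)
           (I0 \<times> K0) (tot_C1 I1 I0 K1 K0) (I1 \<times> K1) (transp (tot_d1 dB dF phi)) (transp (tot_d2 dB dF phi))
           (pi_upper eps)"
  proof -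
  interpret fb I1 I0 K1 K0 dB dF phi eps
    by (rule fb.intro) (fact+)
  show ?thesis
    unfolding induces_homology_iso_def
    using hom_cyc hom_bnd hom_surj hom_inj coh_cyc coh_bnd coh_surj coh_inj by blast
qed

end
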